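(* Let $\widehat G\in\mathbb{C}^{2\times 2}$ and $\widehat J=\mathrm{diag}(j_{11},j_{22})$ with $j_{11},j_{22}\in\{1,-1\}$. Then there exist a unitary $\check U\in\mathbb{C}^{2\times2}$ and a matrix $\check V\in\mathbb{C}^{2\times 2}$ that is both unitary and $\widehat J$-unitary ($\check V^\ast\widehat J\check V=\widehat J$) such that $\widehat T=\check U^\ast\widehat G\check V$ is real with non-negative entries and: (i) if $\widehat J=\pm I_2$, or if $\widehat J$ is indefinite and the first column of $\widehat G$ has Frobenius norm at least that of the second column, then $\widehat T$ is upper triangular with $\hat t_{11}^2\ge\hat t_{12}^2+\hat t_{22}^2$; (ii) if $\widehat J$ is indefinite and the first column of $\widehat G$ has strictly smaller Frobenius norm than the second, then $\widehat T$ is lower triangular with $\hat t_{22}^2\ge\hat t_{21}^2+\hat t_{11}^2$.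
   Context: This is the $2\times 2$ $\widehat J$-UTV factorization. A matrix $V$ is $\widehat J$-unitary if $V^\ast\widehat J V=\widehat J$. *)

theory Defs
  imports "HOL-Analysis.Analysis"
begin

text \<open>2x2 complex matrices are represented as complex^2^2 (rows indexed by type 2).\<close>

definition conj_transpose :: "complex^'n^'m \<Rightarrow> complex^'m^'n" where
  "conj_transpose A = (\<chi> i j. cnj (A $ j $ i))"

definition unitary_mat :: "complex^'n^'n \<Rightarrow> bool" where
  "unitary_mat U \<longleftrightarrow> conj_transpose U ** U = mat 1"

definition J_unitary :: "complex^'n^'n \<Rightarrow> complex^'n^'n \<Rightarrow> bool" where
  "J_unitary J V \<longleftrightarrow> conj_transpose V ** J ** V = J"

definition diag2 :: "complex \<Rightarrow> complex \<Rightarrow> complex^2^2" where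
  "diag2 a b = (\<chi> i k. if i = k then (if i = 1 then a else b) else 0)"

definition col_norm :: "complex^'n^'m \<Rightarrow> 'n \<Rightarrow> real" where
  "col_norm A k = sqrt (\<Sum>i\<in>UNIV. (cmod (A $ i $ k))\<^sup>2)"

end

theory Submission imports Defs begin
definition mk2 :: "complex \<Rightarrow> complex \<Rightarrow> complex \<Rightarrow> complex \<Rightarrow> complex^2^2" where
  "mk2 p q r s = (\<chi> i j. if i = 1 then (if j = 1 then p else q) else (if j = 1 then r else s))"

lemma mk2_nth[simp]: "mk2 p q r s $ 1 $ 1 = p" "mk2 p q r s $ 1 $ 2 = q"
  "mk2 p q r s $ 2 $ 1 = r" "mk2 p q r s $ 2 $ 2 = s"
  by (simp_all add: mk2_def)

lemma mk2_eta: "(A::complex^2^2) = mk2 (A$1$1) (A$1$2) (A$2$1) (A$2$2)"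
  by (simp add: vec_eq_iff forall_2)

lemma mk2_mult[simp]: "mk2 p q r s ** mk2 e f g h = mk2 (p*e+q*g) (p*f+q*h) (r*e+s*g) (r*f+s*h)"
  by (simp add: vec_eq_iff forall_2 matrix_matrix_mult_def sum_2)

lemma mk2_ct[simp]: "conj_transpose (mk2 p q r s) = mk2 (cnj p) (cnj r) (cnj q) (cnj s)"
  by (simp add: vec_eq_iff forall_2 conj_transpose_def)

lemma mk2_eq[simp]: "mk2 p q r s = mk2 e f g h \<longleftrightarrow> p=e \<and> q=f \<and> r=g \<and> s=h"
  by (metis mk2_nth)

lemma mat1_mk2: "(mat 1 :: complex^2^2) = mk2 1 0 0 1"
  by (simp add: vec_eq_iff forall_2 mat_def)

lemma diag2_mk2: "diag2 a b = mk2 a 0 0 b"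
  by (simp add: vec_eq_iff forall_2 diag2_def)

lemma col_norm2: "col_norm (G::complex^2^2) k = sqrt ((cmod (G$1$k))^2 + (cmod (G$2$k))^2)"
  by (simp add: col_norm_def sum_2)

definition ph :: "complex \<Rightarrow> complex" where "ph z = (if z = 0 then 1 else sgn z)"

lemma ph_norm[simp]: "cmod (ph z) = 1" by (simp add: ph_def norm_sgn)
lemma ph_cnj_mult: "cnj (ph z) * z = complex_of_real (cmod z)"
proof (cases "z = 0")
  case False
  have n: "cmod z \<noteq> 0" using False by simp
  have "cnj z * z = complex_of_real (cmod z) * complex_of_real (cmod z)"
    by (metis complex_norm_square mult.commute of_real_mult power2_eq_square)
  moreover have "ph z = z / complex_of_real (cmod z)" using False
    by (simp add: ph_def sgn_div_norm scaleR_conv_of_real divide_inverse_commute)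
  then have "cnj (ph z) = cnj z / complex_of_real (cmod z)" by simp
  ultimately have "cnj (ph z) * z * complex_of_real (cmod z) = complex_of_real (cmod z) * complex_of_real (cmod z)"
    by (simp add: ac_simps)
  then show ?thesis using n by simp
qed (simp add: ph_def)

lemma cnj_mult_unit: "cmod w = 1 \<Longrightarrow> cnj w * w = 1"
  by (metis complex_norm_square mult.commute of_real_1 one_power2 complex_mult_cnj)

lemma lagrange: "(cmod (cnj a1 * b1 + cnj a2 * b2))^2 + (cmod (a1*b2 - a2*b1))^2
   = ((cmod a1)^2 + (cmod a2)^2) * ((cmod b1)^2 + (cmod b2)^2)"
  apply (simp only: cmod_power2)
  apply (simp add: power2_eq_square algebra_simps)
  done

lemma tri:
  fixes a1 a2 b1 b2 :: complex
  assumes le: "(cmod b1)^2 + (cmod b2)^2 \<le> (cmod a1)^2 + (cmod a2)^2"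
  shows "\<exists>U w t11 t12 t22. unitary_mat U \<and> cmod w = 1 \<and> t11 \<ge> 0 \<and> t12 \<ge> 0 \<and> t22 \<ge> 0 \<and>
     t11^2 \<ge> t12^2 + t22^2 \<and>
     conj_transpose U ** mk2 a1 (w*b1) a2 (w*b2) = mk2 (of_real t11) (of_real t12) 0 (of_real t22)"
proof (cases "a1 = 0 \<and> a2 = 0")
  case True
  with le have "b1 = 0 \<and> b2 = 0"
    by (smt (verit) norm_eq_zero zero_less_power2 norm_ge_zero power2_eq_square zero_le_power2)
  with True show ?thesis
    by (intro exI[of _ "mk2 1 0 0 1"] exI[of _ 1] exI[of _ 0])
       (simp add: unitary_mat_def mat1_mk2)
next
  case False
  define s where "s = (cmod a1)^2 + (cmod a2)^2"
  have spos: "s > 0" using False by (auto simp: s_def add_pos_nonneg add_nonneg_pos)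
  define r where "r = sqrt s"
  have rpos: "r > 0" using spos by (simp add: r_def)
  have r2: "r^2 = s" using spos by (simp add: r_def)
  define R where "R = complex_of_real r"
  have R0: "R \<noteq> 0" using rpos by (simp add: R_def)
  have RR: "R * R = a1 * cnj a1 + a2 * cnj a2"
    unfolding R_def using r2 s_def
    by (metis complex_norm_square of_real_add of_real_mult power2_eq_square)
  define c where "c = (cnj a1 * b1 + cnj a2 * b2) / R"
  define w where "w = cnj (ph c)"
  define d where "d = (a1 * b2 - a2 * b1) / R"
  define p where "p = ph (w * d)"
  have wc: "w * c = of_real (cmod c)" unfolding w_def by (simp add: ph_cnj_mult)
  have pd: "cnj p * (w * d) = of_real (cmod (w*d))" unfolding p_def by (simp add: ph_cnj_mult)
  have wn: "cmod w = 1" by (simp add: w_def)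
  have pp: "cnj p * p = 1" by (simp add: p_def cnj_mult_unit)
  have cR: "cnj R = R" by (simp add: R_def)
  define U where "U = mk2 (a1/R) (- cnj a2 / R * p) (a2/R) (cnj a1 / R * p)"
  have uni: "unitary_mat U"
    unfolding unitary_mat_def U_def mat1_mk2 using R0 pp cR
    apply (simp add: field_simps)
    apply (simp add: RR algebra_simps)
    by (metis mult.commute mult.left_commute mult_1)
  have T: "conj_transpose U ** mk2 a1 (w*b1) a2 (w*b2) =
      mk2 (of_real r) (of_real (cmod c)) 0 (of_real (cmod d))"
  proof -
    have "conj_transpose U ** mk2 a1 (w*b1) a2 (w*b2) = mk2 R (w*c) 0 (cnj p * (w * d))"
      unfolding U_def using R0 RR cR
      by (simp add: c_def d_def field_simps)
    also have "\<dots> = mk2 (of_real r) (of_real (cmod c)) 0 (of_real (cmod d))"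
      using wc pd wn by (simp add: R_def norm_mult)
    finally show ?thesis .
  qed
  have ineq: "(cmod c)^2 + (cmod d)^2 \<le> r^2"
  proof -
    have "(cmod c)^2 + (cmod d)^2 = ((cmod (cnj a1 * b1 + cnj a2 * b2))^2 + (cmod (a1*b2 - a2*b1))^2) / r^2"
      using rpos by (simp add: c_def d_def R_def norm_divide power_divide add_divide_distrib del: add_divide_distrib) (simp add: add_divide_distrib)
    also have "\<dots> = (cmod b1)^2 + (cmod b2)^2"
      unfolding lagrange r2 s_def[symmetric] using spos by simp
    also have "\<dots> \<le> r^2" using le r2 s_def by simp
    finally show ?thesis .
  qed
  show ?thesis
    by (rule exI[of _ U], rule exI[of _ w], rule exI[of _ r], rule exI[of _ "cmod c"], rule exI[of _ "cmod d"])
       (use uni wn rpos ineq T in auto)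
qed

theorem mainTheorem7:
  fixes G :: "complex^2^2" and j1 j2 :: complex
  assumes "j1 \<in> {1, -1}" and "j2 \<in> {1, -1}"
  shows "\<exists>U V :: complex^2^2.
     unitary_mat U \<and> unitary_mat V \<and> J_unitary (diag2 j1 j2) V \<and>
     (let T = conj_transpose U ** G ** V in
        (\<forall>i k. T $ i $ k \<in> \<real> \<and> Re (T $ i $ k) \<ge> 0) \<and>
        ((j1 = j2 \<or> (j1 \<noteq> j2 \<and> col_norm G 1 \<ge> col_norm G 2)) \<longrightarrow>
           T $ 2 $ 1 = 0 \<and>
           (Re (T $ 1 $ 1))\<^sup>2 \<ge> (Re (T $ 1 $ 2))\<^sup>2 + (Re (T $ 2 $ 2))\<^sup>2) \<and>
        ((j1 \<noteq> j2 \<and> col_norm G 1 < col_norm G 2) \<longrightarrow>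
           T $ 1 $ 2 = 0 \<and>
           (Re (T $ 2 $ 2))\<^sup>2 \<ge> (Re (T $ 2 $ 1))\<^sup>2 + (Re (T $ 1 $ 1))\<^sup>2))"
proof -
  obtain g11 g12 g21 g22 where G: "G = mk2 g11 g12 g21 g22" by (metis mk2_eta)
  define n1 where "n1 = (cmod g11)^2 + (cmod g21)^2"
  define n2 where "n2 = (cmod g12)^2 + (cmod g22)^2"
  have cmp: "col_norm G 1 \<ge> col_norm G 2 \<longleftrightarrow> n2 \<le> n1"
    by (simp add: col_norm2 G n1_def n2_def)
  consider (A) "n2 \<le> n1" | (B) "n1 < n2" "j1 = j2" | (C) "n1 < n2" "j1 \<noteq> j2" by linarith
  then show ?thesis
  proof cases
    case A
    then obtain U w t11 t12 t22 where U: "unitary_mat U" and w: "cmod w = 1" and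
      t: "t11 \<ge> 0" "t12 \<ge> 0" "t22 \<ge> 0" "t11^2 \<ge> t12^2 + t22^2" and
      E: "conj_transpose U ** mk2 g11 (w*g12) g21 (w*g22) = mk2 (of_real t11) (of_real t12) 0 (of_real t22)"
      using tri[of g12 g22 g11 g21] unfolding n1_def n2_def by blast
    define V where "V = mk2 1 0 0 w"
    have cw: "cnj w * w = 1" using w by (simp add: cnj_mult_unit)
    have GV: "G ** V = mk2 g11 (w*g12) g21 (w*g22)" by (simp add: G V_def mult.commute)
    have T: "conj_transpose U ** G ** V = mk2 (of_real t11) (of_real t12) 0 (of_real t22)"
      by (metis matrix_mul_assoc GV E)
    have VU: "unitary_mat V" and VJ: "J_unitary (diag2 j1 j2) V"
      using cw by (simp_all add: unitary_mat_def J_unitary_def diag2_mk2 mat1_mk2 V_def cw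
          mult.assoc mult.left_commute[of "cnj w"])
    show ?thesis
      apply (rule exI[of _ U], rule exI[of _ V])
      using U t A cmp
      by (simp add: T Let_def forall_2 VU VJ)
  next
    case B
    then obtain U w t11 t12 t22 where U: "unitary_mat U" and w: "cmod w = 1" and
      t: "t11 \<ge> 0" "t12 \<ge> 0" "t22 \<ge> 0" "t11^2 \<ge> t12^2 + t22^2" and
      E: "conj_transpose U ** mk2 g12 (w*g11) g22 (w*g21) = mk2 (of_real t11) (of_real t12) 0 (of_real t22)"
      using tri[of g11 g21 g12 g22] unfolding n1_def n2_def by force
    define V where "V = mk2 0 w 1 0"
    have cw: "cnj w * w = 1" using w by (simp add: cnj_mult_unit)
    have GV: "G ** V = mk2 g12 (w*g11) g22 (w*g21)" by (simp add: G V_def mult.commute)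
    have T: "conj_transpose U ** G ** V = mk2 (of_real t11) (of_real t12) 0 (of_real t22)"
      by (metis matrix_mul_assoc GV E)
    have VU: "unitary_mat V" and VJ: "J_unitary (diag2 j1 j2) V"
      using B by (simp_all add: unitary_mat_def J_unitary_def diag2_mk2 mat1_mk2 V_def cw
          mult.assoc mult.left_commute[of "cnj w"])
    show ?thesis
      apply (rule exI[of _ U], rule exI[of _ V])
      using U t B VU VJ
      by (simp add: T Let_def forall_2 VU VJ)
  next
    case C
    then obtain U w t11 t12 t22 where U: "unitary_mat U" and w: "cmod w = 1" and
      t: "t11 \<ge> 0" "t12 \<ge> 0" "t22 \<ge> 0" "t11^2 \<ge> t12^2 + t22^2" and
      E: "conj_transpose U ** mk2 g12 (w*g11) g22 (w*g21) = mk2 (of_real t11) (of_real t12) 0 (of_real t22)"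
      using tri[of g11 g21 g12 g22] unfolding n1_def n2_def by force
    obtain u1 u2 u3 u4 where Ue: "U = mk2 u1 u2 u3 u4" by (metis mk2_eta)
    define V where "V = mk2 w 0 0 1"
    define U' where "U' = mk2 u2 u1 u4 u3"
    have cw: "cnj w * w = 1" using w by (simp add: cnj_mult_unit)
    have T: "conj_transpose U' ** G ** V = mk2 (of_real t22) 0 (of_real t12) (of_real t11)"
      using E by (simp add: Ue U'_def G V_def algebra_simps)
    have U': "unitary_mat U'" using U by (simp add: Ue U'_def unitary_mat_def mat1_mk2 add.commute)
    have VU: "unitary_mat V" and VJ: "J_unitary (diag2 j1 j2) V"
      using cw by (simp_all add: unitary_mat_def J_unitary_def diag2_mk2 mat1_mk2 V_def cw
          mult.assoc mult.left_commute[of "cnj w"])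
    show ?thesis
      apply (rule exI[of _ U'], rule exI[of _ V])
      using U' t C cmp
      by (simp add: T Let_def forall_2 VU VJ add.commute)
  qed
qed

end
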